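(* Let $\delta\in(0,1)$, $\ell\in\mathbb N$, let $\mu$ be a distribution over $\{0,1\}^n$ and $\xi$ a $(\delta,\ell)$-robust detailing of $\mu$ with respect to a finite set $A$. Let $B$ be a finite set with $|B|\le\ell$, let $\xi'$ be a refinement of $\xi$ with respect to $B$, let $\eta=\xi'|_{2,3}$ (a distribution over $A\times B$), and let $\xi_{\langle\eta\rangle}$ be the flat refinement of $\xi$ with respect to $\eta$. Let $\Lambda'$ and $\Lambda_{\langle B\rangle}$ be the type distributions of $\xi'$ and $\xi_{\langle\eta\rangle}$ respectively (as detailings with respect to $A\times B$). Then $d^\eta_{EM}(\Lambda',\Lambda_{\langle B\rangle})\le\sqrt\delta$.
   Context: A detailing of $\mu$ w.r.t. a finite set $C$ is a distribution $\zeta$ over $\{0,1\}^n\times C$ with first marginal $\mu$; its type of $i\in[n]$ is $t_i\in[0,1]^C$, $t_i(c)=\Pr_{x\sim\zeta|_1^{2:c}}[x_i=1]$ when $\zeta|_2(c)>0$ (conditioning on second coordinate $c$) and $0$ otherwise; its type distribution is the law of $t_{\mathbf i}$, $\mathbf i$ uniform in $[n]$. Its index is $\mathrm{Ind}(\zeta)=\mathbb{E}_{i\sim[n]}\mathbb{E}_{c\sim\zeta|_2}[t_i(c)^2]$. A refinement of $\xi$ (over $\{0,1\}^n\times A$) with respect to $B$ is a distribution $\xi'$ over $\{0,1\}^n\times A\times B$ with $\xi'|_{1,2}=\xi$, viewed as a detailing of $\mu$ w.r.t. $A\times B$. $\xi$ is $(\delta,\ell)$-robust if $\mathrm{Ind}(\xi')\le\mathrm{Ind}(\xi)+\delta$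 for every finite $B$ with $|B|\le\ell$ and every refinement $\xi'$ of $\xi$ w.r.t. $B$. For a distribution $\eta$ on $A\times B$ with $\eta|_1=\xi|_2$, the flat refinement is $\xi_{\langle\eta\rangle}(x,a,b)=\xi(x,a)\cdot\eta|_2^{1:a}(b)$. For a distribution $\eta$ on a finite set $C$, $d^\eta_{\ell_1}(x,y)=\sum_c\eta(c)|x_c-y_c|$ on $[0,1]^C$, and $d^\eta_{EM}$ is the Earth Mover distance over it. *)

theory Defs
  imports "HOL-Probability.Probability"
begin

text \<open>Points of the cube are functions 'n \<Rightarrow> bool on a finite index type 'n (so [n] = UNIV).
A detailing w.r.t. C is a pmf on the cube times the type 'c whose second marginal is supported in C.\<close>

definition detailing :: "('n \<Rightarrow> bool) pmf \<Rightarrow> 'c set \<Rightarrow> (('n \<Rightarrow> bool) \<times> 'c) pmf \<Rightarrow> bool" where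
  "detailing \<mu> C \<zeta> \<longleftrightarrow> finite C \<and> map_pmf fst \<zeta> = \<mu> \<and> set_pmf (map_pmf snd \<zeta>) \<subseteq> C"

definition type_of :: "(('n \<Rightarrow> bool) \<times> 'c) pmf \<Rightarrow> 'n \<Rightarrow> 'c \<Rightarrow> real" where
  "type_of \<zeta> i c =
     (if pmf (map_pmf snd \<zeta>) c > 0
      then measure_pmf.prob (cond_pmf \<zeta> {p. snd p = c}) {p. fst p i}
      else 0)"

definition type_dist :: "(('n::finite \<Rightarrow> bool) \<times> 'c) pmf \<Rightarrow> ('c \<Rightarrow> real) pmf" where
  "type_dist \<zeta> = map_pmf (\<lambda>i. type_of \<zeta> i) (pmf_of_set (UNIV :: 'n set))"

definition Ind :: "(('n::finite \<Rightarrow> bool) \<times> 'c) pmf \<Rightarrow> real" where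
  "Ind \<zeta> = measure_pmf.expectation (pmf_of_set (UNIV :: 'n set))
             (\<lambda>i. measure_pmf.expectation (map_pmf snd \<zeta>) (\<lambda>c. (type_of \<zeta> i c)^2))"

text \<open>Refinement of \<xi> w.r.t. B; a pmf on ('n\<Rightarrow>bool) \<times> 'a \<times> 'b is literally a pmf on
('n\<Rightarrow>bool) \<times> ('a \<times> 'b), i.e. a detailing w.r.t. A \<times> B.\<close>
definition refinement :: "(('n \<Rightarrow> bool) \<times> 'a) pmf \<Rightarrow> 'b set \<Rightarrow> (('n \<Rightarrow> bool) \<times> 'a \<times> 'b) pmf \<Rightarrow> bool" where
  "refinement \<xi> B \<xi>' \<longleftrightarrow> finite B \<and> map_pmf (\<lambda>(x, a, b). (x, a)) \<xi>' = \<xi>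
      \<and> set_pmf (map_pmf (\<lambda>(x, a, b). b) \<xi>') \<subseteq> B"

text \<open>Robustness: every finite set B with |B| \<le> l is (up to relabelling) a finite set of naturals.\<close>
definition robust :: "real \<Rightarrow> nat \<Rightarrow> (('n::finite \<Rightarrow> bool) \<times> 'a) pmf \<Rightarrow> bool" where
  "robust \<delta> l \<xi> \<longleftrightarrow>
     (\<forall>(B :: nat set) (\<xi>' :: (('n \<Rightarrow> bool) \<times> 'a \<times> nat) pmf).
        finite B \<and> card B \<le> l \<and> refinement \<xi> B \<xi>' \<longrightarrow> Ind \<xi>' \<le> Ind \<xi> + \<delta>)"

definition flat_refinement :: "(('n \<Rightarrow> bool) \<times> 'a) pmf \<Rightarrow> ('a \<times> 'b) pmf \<Rightarrow> (('n \<Rightarrow> bool) \<times> 'a \<times> 'b) pmf" where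
  "flat_refinement \<xi> \<eta> =
     bind_pmf \<xi> (\<lambda>(x, a). map_pmf (\<lambda>(a', b). (x, a, b)) (cond_pmf \<eta> {p. fst p = a}))"

definition d_l1 :: "'c pmf \<Rightarrow> ('c \<Rightarrow> real) \<Rightarrow> ('c \<Rightarrow> real) \<Rightarrow> real" where
  "d_l1 \<eta> x y = (\<Sum>c\<in>set_pmf \<eta>. pmf \<eta> c * \<bar>x c - y c\<bar>)"

definition d_EM :: "('t \<Rightarrow> 't \<Rightarrow> real) \<Rightarrow> 't pmf \<Rightarrow> 't pmf \<Rightarrow> real" where
  "d_EM d P Q = Inf {measure_pmf.expectation \<gamma> (\<lambda>(x, y). d x y) | \<gamma>.
                      map_pmf fst \<gamma> = P \<and> map_pmf snd \<gamma> = Q}"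

end

theory Submission
  imports Defs
begin

lemma meas_fin:
  assumes "finite F" "X \<inter> set_pmf p \<subseteq> F"
  shows "measure_pmf.prob p X = (\<Sum>y\<in>F\<inter>X. pmf p y)"
proof -
  have "measure_pmf.prob p X = measure_pmf.prob p (X \<inter> set_pmf p)"
    by (simp add: measure_Int_set_pmf)
  also have "X \<inter> set_pmf p = (F \<inter> X) \<inter> set_pmf p" using assms by auto
  also have "measure_pmf.prob p \<dots> = measure_pmf.prob p (F \<inter> X)"
    by (simp add: measure_Int_set_pmf)
  also have "\<dots> = (\<Sum>y\<in>F\<inter>X. pmf p y)"
    using assms(1) by (simp add: measure_measure_pmf_finite)
  finally show ?thesis .
qed

lemma sum_pair_fst:
  fixes g :: "('n::finite \<Rightarrow> bool) \<times> 'c \<Rightarrow> real"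
  shows "(\<Sum>y\<in>((\<lambda>x. (x,c)) ` P). g y) = (\<Sum>x\<in>P. g (x,c))"
  by (subst sum.reindex) (auto simp: inj_on_def)

lemma pmf_snd_sum:
  fixes \<zeta> :: "(('n::finite \<Rightarrow> bool) \<times> 'c) pmf"
  shows "pmf (map_pmf snd \<zeta>) c = (\<Sum>x\<in>UNIV. pmf \<zeta> (x,c))"
proof -
  have "pmf (map_pmf snd \<zeta>) c = measure_pmf.prob \<zeta> (snd -` {c})" by (simp add: pmf_map)
  also have "\<dots> = (\<Sum>y\<in>((\<lambda>x. (x,c)) ` UNIV) \<inter> snd -` {c}. pmf \<zeta> y)"
    by (rule meas_fin) auto
  also have "((\<lambda>x. (x,c)) ` UNIV) \<inter> snd -` {c} = (\<lambda>x. (x,c)) ` UNIV" by auto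
  finally show ?thesis by (simp add: sum_pair_fst)
qed

lemma type_of_eq:
  fixes \<zeta> :: "(('n::finite \<Rightarrow> bool) \<times> 'c) pmf"
  shows "type_of \<zeta> i c = (\<Sum>x\<in>{x. x i}. pmf \<zeta> (x,c)) / pmf (map_pmf snd \<zeta>) c"
proof (cases "pmf (map_pmf snd \<zeta>) c > 0")
  case True
  let ?s = "{p. snd p = c}"
  have ne: "set_pmf \<zeta> \<inter> ?s \<noteq> {}"
  proof -
    have "c \<in> set_pmf (map_pmf snd \<zeta>)" using True by (metis less_irrefl set_pmf_iff)
    then show ?thesis by auto
  qed
  have ms: "measure_pmf.prob \<zeta> ?s = pmf (map_pmf snd \<zeta>) c"
    by (simp add: pmf_map vimage_def)
  have "measure_pmf.prob (cond_pmf \<zeta> ?s) {p. fst p i}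
      = (\<Sum>y\<in>((\<lambda>x. (x,c)) ` UNIV) \<inter> {p. fst p i}. pmf (cond_pmf \<zeta> ?s) y)"
    by (rule meas_fin) (use ne in auto)
  also have "((\<lambda>x. (x,c)) ` UNIV) \<inter> {p. fst p i} = (\<lambda>x. (x,c)) ` {x. x i}" by auto
  also have "(\<Sum>y\<in>\<dots>. pmf (cond_pmf \<zeta> ?s) y) = (\<Sum>x\<in>{x. x i}. pmf (cond_pmf \<zeta> ?s) (x,c))"
    by (rule sum_pair_fst)
  also have "\<dots> = (\<Sum>x\<in>{x. x i}. pmf \<zeta> (x,c) / pmf (map_pmf snd \<zeta>) c)"
    by (simp add: pmf_cond[OF ne] ms)
  finally show ?thesis using True by (simp add: type_of_def sum_divide_distrib)
next
  case False
  then have "pmf (map_pmf snd \<zeta>) c = 0" using pmf_nonneg[of "map_pmf snd \<zeta>" c] by linarith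
  then show ?thesis by (simp add: type_of_def)
qed

lemma pmf_relabel:
  fixes \<xi>' :: "(('n \<Rightarrow> bool) \<times> 'a \<times> 'b) pmf" and g :: "'b \<Rightarrow> nat"
  assumes inj: "inj_on g B" and sub: "\<And>x a b. (x,a,b) \<in> set_pmf \<xi>' \<Longrightarrow> b \<in> B" and b: "b \<in> B"
  shows "pmf (map_pmf (\<lambda>(x,a,b). (x,a,g b)) \<xi>') (x,a,g b) = pmf \<xi>' (x,a,b)"
proof -
  let ?h = "\<lambda>(x,a,b). (x,a,g b)"
  have "pmf (map_pmf ?h \<xi>') (x,a,g b) = measure_pmf.prob \<xi>' (?h -` {(x,a,g b)})" by (simp add: pmf_map)
  also have "\<dots> = (\<Sum>y\<in>{(x,a,b)} \<inter> ?h -` {(x,a,g b)}. pmf \<xi>' y)"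
  proof (rule meas_fin)
    show "?h -` {(x, a, g b)} \<inter> set_pmf \<xi>' \<subseteq> {(x, a, b)}"
      using inj sub b by (auto simp: inj_on_def)
  qed simp
  also have "{(x,a,b)} \<inter> ?h -` {(x,a,g b)} = {(x,a,b)}" by auto
  finally show ?thesis by simp
qed

lemma robust_apply:
  fixes \<xi> :: "(('n::finite \<Rightarrow> bool) \<times> 'a) pmf" and \<xi>' :: "(('n \<Rightarrow> bool) \<times> 'a \<times> 'b) pmf"
  assumes rob: "robust \<delta> l \<xi>" and fB: "finite B" and cB: "card B \<le> l" and ref: "refinement \<xi> B \<xi>'"
  shows "Ind \<xi>' \<le> Ind \<xi> + \<delta>"
proof -
  obtain g :: "'b \<Rightarrow> nat" and m where g: "g ` B = {i. i < m}" "inj_on g B"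
    using finite_imp_inj_to_nat_seg[OF fB] by blast
  define h where "h = (\<lambda>(x::'n\<Rightarrow>bool,a::'a,b). (x,a,g b))"
  define \<xi>'' where "\<xi>'' = map_pmf h \<xi>'"
  have subB: "\<And>x a b. (x,a,b) \<in> set_pmf \<xi>' \<Longrightarrow> b \<in> B"
    using ref unfolding refinement_def by force
  have mapeq: "map_pmf (\<lambda>(x, a, b). (x, a)) \<xi>' = \<xi>" using ref unfolding refinement_def by simp
  have ref2: "refinement \<xi> (g ` B) \<xi>''"
  proof -
    have "map_pmf (\<lambda>(x, a, b). (x, a)) \<xi>'' = \<xi>"
      unfolding \<xi>''_def h_def map_pmf_comp mapeq[symmetric]
      by (rule map_pmf_cong) auto
    moreover have "set_pmf (map_pmf (\<lambda>(x, a, b). b) \<xi>'') \<subseteq> g ` B"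
    proof
      fix b assume "b \<in> set_pmf (map_pmf (\<lambda>(x, a, b). b) \<xi>'')"
      then obtain y where y: "y \<in> set_pmf \<xi>'" "b = (\<lambda>(x, a, b). b) (h y)"
        unfolding \<xi>''_def set_map_pmf image_image by blast
      obtain x a b' where "y = (x,a,b')" by (cases y) auto
      then show "b \<in> g ` B" using y subB unfolding h_def by auto
    qed
    ultimately show ?thesis using fB unfolding refinement_def by simp
  qed
  have "Ind \<xi>'' \<le> Ind \<xi> + \<delta>"
  proof -
    have "finite (g ` B)" "card (g ` B) \<le> l" using fB cB card_image_le[OF fB, of g] by auto
    with rob ref2 show ?thesis unfolding robust_def by blast
  qed
  moreover have "Ind \<xi>'' = Ind \<xi>'"
  proof -
    have pw: "pmf \<xi>'' (x,a,g b) = pmf \<xi>' (x,a,b)" if "b \<in> B" for x a b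
      unfolding \<xi>''_def h_def using pmf_relabel[where \<xi>'=\<xi>' and B=B and g=g, OF g(2) subB that] by simp
    have ms: "pmf (map_pmf snd \<xi>'') (a, g b) = pmf (map_pmf snd \<xi>') (a,b)" if "b \<in> B" for a b
      by (simp add: pmf_snd_sum pw that)
    have ty: "type_of \<xi>'' i (a, g b) = type_of \<xi>' i (a,b)" if "b \<in> B" for i a b
      by (simp add: type_of_eq ms pw that)
    have msnd: "map_pmf snd \<xi>'' = map_pmf (\<lambda>(a,b). (a, g b)) (map_pmf snd \<xi>')"
      by (simp add: \<xi>''_def h_def map_pmf_comp case_prod_beta)
    have "measure_pmf.expectation (map_pmf snd \<xi>'') (\<lambda>c. (type_of \<xi>'' i c)^2)
        = measure_pmf.expectation (map_pmf snd \<xi>') (\<lambda>c. (type_of \<xi>' i c)^2)" for i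
      unfolding msnd integral_map_pmf
      by (rule integral_cong_AE) (use subB in \<open>auto simp: AE_measure_pmf_iff ty\<close>)
    then show ?thesis unfolding Ind_def by simp
  qed
  ultimately show ?thesis by simp
qed

theorem lemma5p4:
  fixes \<mu> :: "('n::finite \<Rightarrow> bool) pmf"
    and \<xi> :: "(('n \<Rightarrow> bool) \<times> 'a) pmf"
    and \<xi>' :: "(('n \<Rightarrow> bool) \<times> 'a \<times> 'b) pmf"
    and A :: "'a set" and B :: "'b set" and \<delta> :: real and l :: nat
  assumes "0 < \<delta>" "\<delta> < 1"
    and "detailing \<mu> A \<xi>"
    and "robust \<delta> l \<xi>"
    and "finite B" "card B \<le> l"
    and "refinement \<xi> B \<xi>'"
  shows "d_EM (d_l1 (map_pmf snd \<xi>')) (type_dist \<xi>')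
           (type_dist (flat_refinement \<xi> (map_pmf snd \<xi>'))) \<le> sqrt \<delta>"
proof -
  note det = assms(3) and rob = assms(4) and fB = assms(5) and ref = assms(7)
  define \<eta> where "\<eta> = map_pmf snd \<xi>'"
  define \<xi>2 where "\<xi>2 = map_pmf snd \<xi>"
  define fl where "fl = flat_refinement \<xi> \<eta>"
  define N where "N = real (card (UNIV::'n set))"
  have N: "N > 0" unfolding N_def by simp
  have fA: "finite A" and sA: "set_pmf \<xi>2 \<subseteq> A" using det unfolding detailing_def \<xi>2_def by auto
  have mapeq: "map_pmf (\<lambda>(x, a, b). (x, a)) \<xi>' = \<xi>" using ref unfolding refinement_def by simp
  have subB: "\<And>x a b. (x,a,b) \<in> set_pmf \<xi>' \<Longrightarrow> b \<in> B"
    using ref unfolding refinement_def by force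
  have subA: "a \<in> A" if "(x,a,b) \<in> set_pmf \<xi>'" for x a b
  proof -
    have "(x,a) \<in> set_pmf \<xi>" using that unfolding mapeq[symmetric] by force
    then have "a \<in> set_pmf \<xi>2" unfolding \<xi>2_def by force
    then show ?thesis using sA by auto
  qed
  have set\<eta>: "set_pmf \<eta> \<subseteq> A \<times> B" unfolding \<eta>_def using subA subB by force
  have fAB: "finite (A \<times> B)" using fA fB by simp
  have F1: "pmf \<eta> (a,b) = (\<Sum>x\<in>UNIV. pmf \<xi>' (x,a,b))" for a b
    unfolding \<eta>_def by (rule pmf_snd_sum)
  have F3: "pmf \<xi>2 a = (\<Sum>x\<in>UNIV. pmf \<xi> (x,a))" for a
    unfolding \<xi>2_def by (rule pmf_snd_sum)
  have F2: "pmf \<xi> (x,a) = (\<Sum>b\<in>B. pmf \<xi>' (x,a,b))" for x a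
  proof -
    let ?f = "\<lambda>(x::'n\<Rightarrow>bool, a::'a, b::'b). (x, a)"
    have "pmf \<xi> (x,a) = measure_pmf.prob \<xi>' (?f -` {(x,a)})"
      unfolding mapeq[symmetric] by (simp add: pmf_map)
    also have "\<dots> = (\<Sum>y\<in>((\<lambda>b. (x,a,b)) ` B) \<inter> ?f -` {(x,a)}. pmf \<xi>' y)"
      by (rule meas_fin) (use fB subB in auto)
    also have "((\<lambda>b. (x,a,b)) ` B) \<inter> ?f -` {(x,a)} = (\<lambda>b. (x,a,b)) ` B" by auto
    also have "(\<Sum>y\<in>(\<lambda>b. (x,a,b)) ` B. pmf \<xi>' y) = (\<Sum>b\<in>B. pmf \<xi>' (x,a,b))"
      by (subst sum.reindex) (auto simp: inj_on_def)
    finally show ?thesis .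
  qed
  have F\<eta>2: "(\<Sum>b\<in>B. pmf \<eta> (a,b)) = pmf \<xi>2 a" for a
    unfolding F1 F3 F2 by (rule sum.swap)
  define S' where "S' i a b = (\<Sum>x\<in>{x. x i}. pmf \<xi>' (x,a,b))" for i a b
  define S where "S i a = (\<Sum>x\<in>{x. x i}. pmf \<xi> (x,a))" for i a
  have SS: "S i a = (\<Sum>b\<in>B. S' i a b)" for i a
    unfolding S_def S'_def F2 by (rule sum.swap)
  have S'le: "0 \<le> S' i a b \<and> S' i a b \<le> pmf \<eta> (a,b)" for i a b
    unfolding S'_def F1 by (auto intro!: sum_nonneg sum_mono2)
  have Sle: "0 \<le> S i a \<and> S i a \<le> pmf \<xi>2 a" for i a
    unfolding S_def F3 by (auto intro!: sum_nonneg sum_mono2)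
  have \<eta>T: "pmf \<eta> (a,b) * type_of \<xi>' i (a,b) = S' i a b" for i a b
  proof -
    have "type_of \<xi>' i (a,b) = S' i a b / pmf \<eta> (a,b)"
      unfolding type_of_eq S'_def \<eta>_def by simp
    then show ?thesis using S'le[of i a b] by (cases "pmf \<eta> (a,b) = 0") auto
  qed
  have \<xi>T: "pmf \<xi>2 a * type_of \<xi> i a = S i a" for i a
  proof -
    have "type_of \<xi> i a = S i a / pmf \<xi>2 a"
      unfolding type_of_eq S_def \<xi>2_def by simp
    then show ?thesis using Sle[of i a] by (cases "pmf \<xi>2 a = 0") auto
  qed
  define Q' where "Q' i = (\<Sum>c\<in>A \<times> B. (type_of \<xi>' i c)^2 * pmf \<eta> c)" for i
  define Q where "Q i = (\<Sum>a\<in>A. (type_of \<xi> i a)^2 * pmf \<xi>2 a)" for i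
  have IndX': "Ind \<xi>' = (\<Sum>i\<in>UNIV. Q' i) / N"
  proof -
    have "measure_pmf.expectation \<eta> (\<lambda>c. (type_of \<xi>' i c)\<^sup>2) = (\<Sum>c\<in>A \<times> B. (type_of \<xi>' i c)\<^sup>2 * pmf \<eta> c)" for i
      by (rule integral_measure_pmf_real[OF fAB]) (use set\<eta> in auto)
    then show ?thesis unfolding Ind_def \<eta>_def[symmetric] Q'_def N_def by (simp add: integral_pmf_of_set)
  qed
  have IndX: "Ind \<xi> = (\<Sum>i\<in>UNIV. Q i) / N"
  proof -
    have "measure_pmf.expectation \<xi>2 (\<lambda>c. (type_of \<xi> i c)\<^sup>2) = (\<Sum>c\<in>A. (type_of \<xi> i c)\<^sup>2 * pmf \<xi>2 c)" for i
      by (rule integral_measure_pmf_real[OF fA]) (use sA in auto)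
    then show ?thesis unfolding Ind_def \<xi>2_def[symmetric] Q_def N_def by (simp add: integral_pmf_of_set)
  qed
  have key: "(\<Sum>c\<in>A \<times> B. pmf \<eta> c * (type_of \<xi>' i c - type_of \<xi> i (fst c))^2) = Q' i - Q i" for i
  proof -
    have pa: "(\<Sum>b\<in>B. pmf \<eta> (a,b) * (type_of \<xi>' i (a,b) - type_of \<xi> i a)^2)
       = (\<Sum>b\<in>B. (type_of \<xi>' i (a,b))^2 * pmf \<eta> (a,b)) - (type_of \<xi> i a)^2 * pmf \<xi>2 a" for a
    proof -
      have "pmf \<eta> (a,b) * (type_of \<xi>' i (a,b) - type_of \<xi> i a)^2
          = (type_of \<xi>' i (a,b))^2 * pmf \<eta> (a,b) - 2 * type_of \<xi> i a * (pmf \<eta> (a,b) * type_of \<xi>' i (a,b))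
            + (type_of \<xi> i a)^2 * pmf \<eta> (a,b)" for b
        by (simp add: power2_eq_square algebra_simps)
      then have "(\<Sum>b\<in>B. pmf \<eta> (a,b) * (type_of \<xi>' i (a,b) - type_of \<xi> i a)^2)
          = (\<Sum>b\<in>B. (type_of \<xi>' i (a,b))^2 * pmf \<eta> (a,b)) - 2 * type_of \<xi> i a * (\<Sum>b\<in>B. S' i a b)
            + (type_of \<xi> i a)^2 * (\<Sum>b\<in>B. pmf \<eta> (a,b))"
        by (simp add: sum.distrib sum_subtractf sum_distrib_left \<eta>T)
      also have "\<dots> = (\<Sum>b\<in>B. (type_of \<xi>' i (a,b))^2 * pmf \<eta> (a,b)) - 2 * type_of \<xi> i a * (pmf \<xi>2 a * type_of \<xi> i a)
            + (type_of \<xi> i a)^2 * pmf \<xi>2 a"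
        by (simp add: F\<eta>2 SS[symmetric] \<xi>T)
      finally show ?thesis by (simp add: power2_eq_square algebra_simps)
    qed
    have "(\<Sum>c\<in>A \<times> B. pmf \<eta> c * (type_of \<xi>' i c - type_of \<xi> i (fst c))^2)
        = (\<Sum>a\<in>A. \<Sum>b\<in>B. pmf \<eta> (a,b) * (type_of \<xi>' i (a,b) - type_of \<xi> i a)^2)"
      by (simp add: sum.cartesian_product case_prod_beta)
    also have "\<dots> = (\<Sum>a\<in>A. \<Sum>b\<in>B. (type_of \<xi>' i (a,b))^2 * pmf \<eta> (a,b)) - Q i"
      unfolding pa Q_def by (simp add: sum_subtractf)
    also have "(\<Sum>a\<in>A. \<Sum>b\<in>B. (type_of \<xi>' i (a,b))^2 * pmf \<eta> (a,b)) = Q' i"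
      unfolding Q'_def by (simp add: sum.cartesian_product case_prod_beta)
    finally show ?thesis .
  qed
  have rb: "Ind \<xi>' \<le> Ind \<xi> + \<delta>" by (rule robust_apply[OF rob fB assms(6) ref])
  have sq: "(\<Sum>i\<in>UNIV. \<Sum>c\<in>A \<times> B. pmf \<eta> c * (type_of \<xi>' i c - type_of \<xi> i (fst c))^2) / N \<le> \<delta>"
    using rb unfolding key IndX' IndX by (simp add: sum_subtractf diff_divide_distrib)
  have mfst: "map_pmf fst \<eta> = \<xi>2"
    unfolding \<eta>_def \<xi>2_def mapeq[symmetric] map_pmf_comp by (rule map_pmf_cong) auto
  have flat_pmf: "pmf fl (x,a,b) = pmf \<xi> (x,a) * pmf \<eta> (a,b) / pmf \<xi>2 a" for x a b
  proof -
    define G where "G = (\<lambda>(x'::'n\<Rightarrow>bool, a'::'a). map_pmf (\<lambda>(a'', b). (x', a', b)) (cond_pmf \<eta> {p. fst p = a'}))"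
    have fl_eq: "fl = bind_pmf \<xi> G" unfolding fl_def flat_refinement_def G_def by simp
    have ne: "set_pmf \<eta> \<inter> {p. fst p = a'} \<noteq> {}" if "(x',a') \<in> set_pmf \<xi>" for x' a'
    proof -
      have "a' \<in> set_pmf \<xi>2" using that unfolding \<xi>2_def by force
      then have "a' \<in> fst ` set_pmf \<eta>" unfolding mfst[symmetric] by simp
      then show ?thesis by auto
    qed
    have "pmf fl (x,a,b) = measure_pmf.expectation \<xi> (\<lambda>y. pmf (G y) (x,a,b))"
      unfolding fl_eq by (rule pmf_bind)
    also have "\<dots> = (\<Sum>y\<in>{(x,a)}. pmf (G y) (x,a,b) * pmf \<xi> y)"
    proof (rule integral_measure_pmf_real)
      fix y assume y: "y \<in> set_pmf \<xi>" "pmf (G y) (x, a, b) \<noteq> 0"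
      obtain x' a' where yy: "y = (x',a')" by (cases y)
      have "(x,a,b) \<in> set_pmf (G y)" using y(2) by (simp add: set_pmf_iff)
      then show "y \<in> {(x,a)}" using ne[of x' a'] y(1) unfolding yy G_def by auto
    qed simp
    also have "\<dots> = pmf (G (x,a)) (x,a,b) * pmf \<xi> (x,a)" by simp
    also have "\<dots> = pmf \<xi> (x,a) * pmf \<eta> (a,b) / pmf \<xi>2 a"
    proof (cases "pmf \<xi> (x,a) = 0")
      case False
      then have xa: "(x,a) \<in> set_pmf \<xi>" by (simp add: set_pmf_iff)
      have "pmf (map_pmf (\<lambda>(a'', b). (x, a'', b)) (cond_pmf \<eta> {p. fst p = a})) ((\<lambda>(a'', b). (x, a'', b)) (a,b))
          = pmf (cond_pmf \<eta> {p. fst p = a}) (a,b)"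
        by (rule pmf_map_inj') (auto simp: inj_on_def)
      moreover have "G (x,a) = map_pmf (\<lambda>(a'', b). (x, a'', b)) (cond_pmf \<eta> {p. fst p = a})"
        unfolding G_def using ne[OF xa] by (auto intro!: map_pmf_cong simp: set_cond_pmf[OF ne[OF xa]])
      ultimately have "pmf (G (x,a)) (x,a,b) = pmf (cond_pmf \<eta> {p. fst p = a}) (a,b)"
        by simp
      also have "\<dots> = pmf \<eta> (a,b) / measure_pmf.prob \<eta> {p. fst p = a}"
        using pmf_cond[OF ne[OF xa]] by simp
      also have "measure_pmf.prob \<eta> {p. fst p = a} = pmf \<xi>2 a"
        unfolding mfst[symmetric] by (simp add: pmf_map vimage_def)
      finally show ?thesis by simp
    qed simp
    finally show ?thesis .
  qed
  have F\<tau>: "type_of fl i c = type_of \<xi> i (fst c)" if "pmf \<eta> c > 0" for i c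
  proof -
    obtain a b where c: "c = (a,b)" by (cases c)
    have "c \<in> set_pmf \<eta>" using that by (simp add: set_pmf_iff)
    then have bB: "b \<in> B" using set\<eta> c by auto
    have "pmf \<eta> (a,b) \<le> pmf \<xi>2 a"
      unfolding F\<eta>2[symmetric] by (rule member_le_sum) (use bB fB in auto)
    then have pos: "pmf \<xi>2 a > 0" using that c by simp
    have num: "(\<Sum>x\<in>{x. x i}. pmf fl (x,a,b)) = S i a * pmf \<eta> (a,b) / pmf \<xi>2 a"
      unfolding flat_pmf S_def by (simp add: sum_divide_distrib sum_distrib_right)
    have den: "pmf (map_pmf snd fl) (a,b) = pmf \<eta> (a,b)"
      unfolding pmf_snd_sum flat_pmf using pos
      by (simp add: sum_divide_distrib[symmetric] sum_distrib_right[symmetric] F3[symmetric])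
    have "type_of fl i c = S i a / pmf \<xi>2 a"
      unfolding c type_of_eq num den using that c by simp
    also have "\<dots> = type_of \<xi> i a" unfolding type_of_eq S_def \<xi>2_def by simp
    finally show ?thesis using c by simp
  qed
  define D where "D i c = \<bar>type_of \<xi>' i c - type_of \<xi> i (fst c)\<bar>" for i c
  define \<gamma> where "\<gamma> = map_pmf (\<lambda>i. (type_of \<xi>' i, type_of fl i)) (pmf_of_set (UNIV::'n set))"
  have dnn: "0 \<le> d_l1 \<eta> x y" for x y unfolding d_l1_def by (auto intro!: sum_nonneg)
  have le1: "d_EM (d_l1 \<eta>) (type_dist \<xi>') (type_dist fl)
      \<le> measure_pmf.expectation \<gamma> (\<lambda>(x, y). d_l1 \<eta> x y)"
    unfolding d_EM_def
  proof (rule cInf_lower)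
    show "measure_pmf.expectation \<gamma> (\<lambda>(x, y). d_l1 \<eta> x y) \<in> {measure_pmf.expectation \<gamma> (\<lambda>(x, y). d_l1 \<eta> x y) |\<gamma>.
          map_pmf fst \<gamma> = type_dist \<xi>' \<and> map_pmf snd \<gamma> = type_dist fl}"
    proof -
      have "map_pmf fst \<gamma> = type_dist \<xi>'" "map_pmf snd \<gamma> = type_dist fl"
        unfolding \<gamma>_def type_dist_def by (simp_all add: map_pmf_comp)
      then show ?thesis by blast
    qed
    show "bdd_below {measure_pmf.expectation \<gamma> (\<lambda>(x, y). d_l1 \<eta> x y) |\<gamma>.
          map_pmf fst \<gamma> = type_dist \<xi>' \<and> map_pmf snd \<gamma> = type_dist fl}"
      by (rule bdd_belowI[where m=0]) (auto intro!: integral_nonneg simp: dnn split: prod.splits)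
  qed
  have dl: "d_l1 \<eta> (type_of \<xi>' i) (type_of fl i) = (\<Sum>c\<in>A \<times> B. pmf \<eta> c * D i c)" for i
  proof -
    have "d_l1 \<eta> (type_of \<xi>' i) (type_of fl i) = (\<Sum>c\<in>set_pmf \<eta>. pmf \<eta> c * D i c)"
      unfolding d_l1_def D_def by (rule sum.cong) (auto simp: F\<tau> pmf_positive)
    also have "\<dots> = (\<Sum>c\<in>A \<times> B. pmf \<eta> c * D i c)"
      by (rule sum.mono_neutral_left[OF fAB set\<eta>]) (auto simp: set_pmf_iff)
    finally show ?thesis .
  qed
  define L where "L = (\<Sum>i\<in>UNIV. \<Sum>c\<in>A \<times> B. pmf \<eta> c * D i c) / N"
  have le2: "measure_pmf.expectation \<gamma> (\<lambda>(x, y). d_l1 \<eta> x y) = L"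
    unfolding \<gamma>_def L_def N_def by (simp add: integral_pmf_of_set dl)
  define I where "I = (UNIV::'n set) \<times> (A \<times> B)"
  define w where "w p = pmf \<eta> (snd p) / N" for p :: "'n \<times> 'a \<times> 'b"
  have wnn: "0 \<le> w p" for p unfolding w_def using N by simp
  have cp: "(\<Sum>p\<in>I. f p) = (\<Sum>i\<in>UNIV. \<Sum>c\<in>A \<times> B. f (i,c))" for f :: "'n \<times> 'a \<times> 'b \<Rightarrow> real"
    unfolding I_def by (simp add: sum.cartesian_product)
  have CS: "(\<Sum>p\<in>I. sqrt (w p) * (sqrt (w p) * D (fst p) (snd p)))\<^sup>2
      \<le> (\<Sum>p\<in>I. (sqrt (w p))\<^sup>2) * (\<Sum>p\<in>I. (sqrt (w p) * D (fst p) (snd p))\<^sup>2)"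
    by (rule Cauchy_Schwarz_ineq_sum)
  have e1: "(\<Sum>p\<in>I. sqrt (w p) * (sqrt (w p) * D (fst p) (snd p))) = L"
  proof -
    have "(\<Sum>p\<in>I. sqrt (w p) * (sqrt (w p) * D (fst p) (snd p))) = (\<Sum>p\<in>I. w p * D (fst p) (snd p))"
      by (rule sum.cong) (use wnn in \<open>auto simp: mult.assoc[symmetric]\<close>)
    also have "\<dots> = L" unfolding cp L_def w_def
      by (simp add: sum_divide_distrib)
    finally show ?thesis .
  qed
  have e2: "(\<Sum>p\<in>I. (sqrt (w p))\<^sup>2) = 1"
  proof -
    have "(\<Sum>p\<in>I. (sqrt (w p))\<^sup>2) = (\<Sum>p\<in>I. w p)" using wnn by simp
    also have "\<dots> = (\<Sum>i\<in>(UNIV::'n set). (\<Sum>c\<in>A \<times> B. pmf \<eta> c) / N)"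
      unfolding cp w_def by (simp add: sum_divide_distrib)
    also have "\<dots> = 1" using N unfolding sum_pmf_eq_1[OF fAB set\<eta>] N_def by simp
    finally show ?thesis .
  qed
  have e3: "(\<Sum>p\<in>I. (sqrt (w p) * D (fst p) (snd p))\<^sup>2) \<le> \<delta>"
  proof -
    have "(\<Sum>p\<in>I. (sqrt (w p) * D (fst p) (snd p))\<^sup>2) = (\<Sum>p\<in>I. w p * (D (fst p) (snd p))\<^sup>2)"
      using wnn by (simp add: power_mult_distrib)
    also have "\<dots> = (\<Sum>i\<in>UNIV. \<Sum>c\<in>A \<times> B. pmf \<eta> c * (type_of \<xi>' i c - type_of \<xi> i (fst c))^2) / N"
      unfolding cp w_def D_def by (simp add: sum_divide_distrib)
    also have "\<dots> \<le> \<delta>" by (rule sq)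
    finally show ?thesis .
  qed
  have "L\<^sup>2 \<le> \<delta>" using CS e1 e2 e3 by simp
  then have "L \<le> sqrt \<delta>" by (rule real_le_rsqrt)
  then show ?thesis using le1 le2 unfolding \<eta>_def fl_def by simp
qed

end
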